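(* For $N\ge1$ let $\mathbf{m}=N(1,0,\dots,0)^\top\in\mathbb{R}^{N+1}$, $\mathbf{M}=\mathrm{diag}(\mathbf{m})$, and let $\mathbf{Q}_N$ be the tridiagonal matrix with $(\mathbf{Q}_N)_{kk}=-N$, $(\mathbf{Q}_N)_{k+1,k}=N-k$, $(\mathbf{Q}_N)_{k-1,k}=k$ (indices $0,\dots,N$) and zeros elsewhere. For $\mu>0$ let $\mathbf{p}^{(N)}(\mu)=(p_0,\dots,p_N)$ be the positive vector with $\sum_i p_i=1$ satisfying $(\mathbf{M}+\mu\mathbf{Q}_N)\mathbf{p}=\overline{m}\,\mathbf{p}$, $\overline{m}=\mathbf{m}\cdot\mathbf{p}$, and let $\overline{r}=\overline{m}/N=p_0$. Then: (i) if $0<\mu<1$, then $\lim_{N\to\infty}p_0=\lim_{N\to\infty}\overline{r}=1-\mu$, and for each fixed integer $a\ge1$, $\lim_{N\to\infty}p_a=(1-\mu)\mu^a$; (ii) if $\mu\ge1$, then $\lim_{N\to\infty}\overline{r}=\lim_{N\to\infty}p_0=0$.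
   Context: This is the Crow–Kimura quasispecies model with the single peaked fitness landscape; $\mathbf{p}^{(N)}(\mu)$ is the normalized Perron eigenvector of $\mathbf{M}+\mu\mathbf{Q}_N$ and $\overline{m}$ its dominant eigenvalue. *)

theory Defs
  imports Complex_Main
begin

definition mvec :: "nat \<Rightarrow> nat \<Rightarrow> real" where
  "mvec N i = (if i = 0 then real N else 0)"

definition Qmat :: "nat \<Rightarrow> nat \<Rightarrow> nat \<Rightarrow> real" where
  "Qmat N i j =
     (if i = j then - real N
      else if i = j + 1 then real N - real j
      else if j = i + 1 then real j
      else 0)"

definition mbar :: "nat \<Rightarrow> (nat \<Rightarrow> real) \<Rightarrow> real" where
  "mbar N p = (\<Sum>i\<le>N. mvec N i * p i)"

definition qs_vector :: "nat \<Rightarrow> real \<Rightarrow> (nat \<Rightarrow> real) \<Rightarrow> bool" where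
  "qs_vector N \<mu> p \<longleftrightarrow>
     (\<forall>i\<le>N. p i > 0) \<and> (\<Sum>i\<le>N. p i) = 1 \<and>
     (\<forall>i\<le>N. mvec N i * p i + \<mu> * (\<Sum>j\<le>N. Qmat N i j * p j) = mbar N p * p i)"

end

theory Submission imports Defs begin
lemma mbar_eq: "mbar N p = real N * p 0"
proof -
  have "\<And>i. mvec N i * p i = (if i = 0 then real N * p 0 else 0)" by (simp add: mvec_def)
  then show ?thesis unfolding mbar_def by (simp add: sum.delta)
qed

lemma row: assumes "i \<le> N" shows "(\<Sum>j\<le>N. Qmat N i j * f j) = - real N * f i
   + (if 1 \<le> i then (real N - real (i-1)) * f (i-1) else 0)
   + (if i+1 \<le> N then real (i+1) * f (i+1) else 0)"
proof -
  have e: "\<And>j. Qmat N i j * f j = (if j = i then - real N * f i else 0)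
     + (if j + 1 = i then (real N - real j) * f j else 0) + (if j = i+1 then real j * f j else 0)"
    by (auto simp: Qmat_def)
  have s2: "(\<Sum>j\<le>N. (if j + 1 = i then (real N - real j) * f j else 0))
       = (if 1 \<le> i then (real N - real (i-1)) * f (i-1) else 0)"
  proof (cases i)
    case 0 then show ?thesis by simp
  next
    case (Suc k) then show ?thesis using assms by (simp add: sum.delta')
  qed
  show ?thesis unfolding e sum.distrib s2 using assms by (simp add: sum.delta')
qed

lemma le1: assumes "qs_vector N \<mu> p" "i \<le> N" shows "p i \<le> 1" "0 < p i"
proof -
  have pos: "\<forall>i\<le>N. p i > 0" "(\<Sum>i\<le>N. p i) = 1" using assms(1) by (auto simp: qs_vector_def)
  have "p i \<le> (\<Sum>i\<le>N. p i)"
    by (rule member_le_sum) (use pos assms(2) in auto)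
  then show "p i \<le> 1" using pos by simp
  show "0 < p i" using pos assms(2) by auto
qed

lemma row0: assumes "qs_vector N \<mu> p" "N \<ge> 1"
  shows "\<mu> * p 1 = real N * p 0 * (p 0 - 1 + \<mu>)"
proof -
  have "mvec N 0 * p 0 + \<mu> * (\<Sum>j\<le>N. Qmat N 0 j * p j) = mbar N p * p 0"
    using assms(1) by (auto simp: qs_vector_def)
  then have "real N * p 0 + \<mu> * (- real N * p 0 + p 1) = real N * p 0 * p 0"
    using assms(2) by (simp add: row mbar_eq mvec_def)
  then show ?thesis by (simp add: algebra_simps)
qed

lemma rowi: assumes "qs_vector N \<mu> p" "1 \<le> i" "i + 1 \<le> N" "\<mu> > 0"
  shows "p i = (\<mu> * (1 - real (i-1) / real N) * p (i-1) + \<mu> * (real (i+1) / real N) * p (i+1)) / (p 0 + \<mu>)"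
proof -
  have "mvec N i * p i + \<mu> * (\<Sum>j\<le>N. Qmat N i j * p j) = mbar N p * p i"
    using assms(1,3) by (auto simp: qs_vector_def)
  then have h: "\<mu> * (- real N * p i + (real N - real (i-1)) * p (i-1) + real (i+1) * p (i+1)) = real N * p 0 * p i"
    using assms(2,3) by (simp add: row mbar_eq mvec_def)
  have N: "real N > 0" using assms by simp
  have p0: "p 0 > 0" using le1(2)[OF assms(1)] by simp
  have h2: "p i * (p 0 + \<mu>) * real N = \<mu> * (real N - real (i-1)) * p (i-1) + \<mu> * real (i+1) * p (i+1)"
    using h by (simp add: algebra_simps)
  have "p i * (p 0 + \<mu>) = (p i * (p 0 + \<mu>) * real N) / real N" using N by simp
  also have "\<dots> = \<mu> * (1 - real (i-1) / real N) * p (i-1) + \<mu> * (real (i+1) / real N) * p (i+1)"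
    unfolding h2 using N by (simp add: field_simps)
  finally have "p i * (p 0 + \<mu>) = \<mu> * (1 - real (i-1) / real N) * p (i-1) + \<mu> * (real (i+1) / real N) * p (i+1)" .
  then show ?thesis using p0 assms(4) by (simp add: field_simps)
qed

lemma cN: "(\<lambda>N. c / real N) \<longlonglongrightarrow> 0"
  using tendsto_mult_right_zero[OF lim_inverse_n', of c] by simp

theorem proposition4:
  fixes \<mu> :: real and p :: "nat \<Rightarrow> nat \<Rightarrow> real"
  assumes "\<mu> > 0"
    and "\<And>N. N \<ge> 1 \<Longrightarrow> qs_vector N \<mu> (p N)"
  shows "(\<mu> < 1 \<longrightarrow>
            (\<lambda>N. p N 0) \<longlonglongrightarrow> 1 - \<mu> \<and>
            (\<lambda>N. mbar N (p N) / real N) \<longlonglongrightarrow> 1 - \<mu> \<and>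
            (\<forall>a::nat. a \<ge> 1 \<longrightarrow> (\<lambda>N. p N a) \<longlonglongrightarrow> (1 - \<mu>) * \<mu> ^ a))
       \<and> (\<mu> \<ge> 1 \<longrightarrow>
            (\<lambda>N. mbar N (p N) / real N) \<longlonglongrightarrow> 0 \<and>
            (\<lambda>N. p N 0) \<longlonglongrightarrow> 0)"
proof -
  have ev1: "eventually (\<lambda>N. N \<ge> (1::nat)) sequentially" by (rule eventually_ge_at_top)
  have mbev: "eventually (\<lambda>N. p N 0 = mbar N (p N) / real N) sequentially"
    using ev1 by eventually_elim (simp add: mbar_eq)
  have key: "0 < p N 0 \<and> 0 < p N 0 - 1 + \<mu> \<and> real N * p N 0 * (p N 0 - 1 + \<mu>) \<le> \<mu>"
    if N: "N \<ge> 1" for N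
  proof -
    have q: "qs_vector N \<mu> (p N)" using assms(2) N .
    have r: "\<mu> * p N 1 = real N * p N 0 * (p N 0 - 1 + \<mu>)" using row0[OF q N] .
    have p1: "0 < p N 1" "p N 1 \<le> 1" using le1[OF q, of 1] N by auto
    have p0: "0 < p N 0" using le1[OF q, of 0] by auto
    have "0 < real N * p N 0 * (p N 0 - 1 + \<mu>)" using r p1 assms(1) by (metis mult_pos_pos)
    moreover have "0 < real N * p N 0" using p0 N by simp
    ultimately have d: "0 < p N 0 - 1 + \<mu>" by (simp add: zero_less_mult_iff)
    have "\<mu> * p N 1 \<le> \<mu>" using p1 assms(1) by simp
    then show ?thesis using r p0 d by simp
  qed
  have part2: "\<mu> \<ge> 1 \<longrightarrow> (\<lambda>N. mbar N (p N) / real N) \<longlonglongrightarrow> 0 \<and> (\<lambda>N. p N 0) \<longlonglongrightarrow> 0"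
  proof
    assume mu: "\<mu> \<ge> 1"
    have lim: "(\<lambda>N. sqrt (\<mu> / real N)) \<longlonglongrightarrow> 0"
      using tendsto_real_sqrt[OF cN[of \<mu>]] by simp
    have ub: "eventually (\<lambda>N. p N 0 \<le> sqrt (\<mu> / real N)) sequentially"
      using ev1
    proof eventually_elim
      case (elim N)
      note k = key[OF elim]
      have Npos: "real N > 0" using elim by simp
      have "real N * (p N 0)^2 \<le> real N * p N 0 * (p N 0 - 1 + \<mu>)"
        using k mu Npos by (simp add: power2_eq_square mult_left_mono)
      then have "real N * (p N 0)^2 \<le> \<mu>" using k by linarith
      then have "(p N 0)^2 \<le> \<mu> / real N" using Npos by (simp add: field_simps)
      then show ?case by (rule real_le_rsqrt)
    qed
    have lb: "eventually (\<lambda>N. 0 \<le> p N 0) sequentially"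
      using ev1 by eventually_elim (use key in force)
    have l0: "(\<lambda>N. p N 0) \<longlonglongrightarrow> 0"
      by (rule tendsto_sandwich[OF lb ub tendsto_const lim])
    then show "(\<lambda>N. mbar N (p N) / real N) \<longlonglongrightarrow> 0 \<and> (\<lambda>N. p N 0) \<longlonglongrightarrow> 0"
      using Lim_transform_eventually[OF l0 mbev] by simp
  qed
  have part1: "\<mu> < 1 \<longrightarrow>
            (\<lambda>N. p N 0) \<longlonglongrightarrow> 1 - \<mu> \<and>
            (\<lambda>N. mbar N (p N) / real N) \<longlonglongrightarrow> 1 - \<mu> \<and>
            (\<forall>a::nat. a \<ge> 1 \<longrightarrow> (\<lambda>N. p N a) \<longlonglongrightarrow> (1 - \<mu>) * \<mu> ^ a)"
  proof
    assume mu: "\<mu> < 1"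
    have lim: "(\<lambda>N. (1 - \<mu>) + (\<mu> / (1 - \<mu>)) / real N) \<longlonglongrightarrow> 1 - \<mu>"
      using tendsto_add[OF tendsto_const cN[of "\<mu> / (1 - \<mu>)"], of "1 - \<mu>"] by simp
    have ub: "eventually (\<lambda>N. p N 0 \<le> (1 - \<mu>) + (\<mu> / (1 - \<mu>)) / real N) sequentially"
      using ev1
    proof eventually_elim
      case (elim N)
      note k = key[OF elim]
      have Npos: "real N > 0" using elim by simp
      have "real N * (1 - \<mu>) * (p N 0 - 1 + \<mu>) \<le> real N * p N 0 * (p N 0 - 1 + \<mu>)"
        using k mu Npos by (intro mult_right_mono mult_left_mono) auto
      then have "real N * (1 - \<mu>) * (p N 0 - 1 + \<mu>) \<le> \<mu>" using k by linarith
      then have "p N 0 - 1 + \<mu> \<le> \<mu> / (real N * (1 - \<mu>))" using Npos mu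
        by (simp add: field_simps)
      then show ?case by (simp add: field_simps)
    qed
    have lb: "eventually (\<lambda>N. 1 - \<mu> \<le> p N 0) sequentially"
      using ev1 by eventually_elim (use key in force)
    have l0: "(\<lambda>N. p N 0) \<longlonglongrightarrow> 1 - \<mu>"
      by (rule tendsto_sandwich[OF lb ub tendsto_const lim])
    have all: "(\<lambda>N. p N a) \<longlonglongrightarrow> (1 - \<mu>) * \<mu> ^ a" for a
    proof (induction a)
      case 0 then show ?case using l0 by simp
    next
      case (Suc a)
      have evN: "eventually (\<lambda>N. N \<ge> a + 2) sequentially" by (rule eventually_ge_at_top)
      define F where "F N = (\<mu> * (1 - real a / real N) * p N a + \<mu> * (real (a+2) / real N * p N (a+2))) / (p N 0 + \<mu>)" for N
      have eq: "eventually (\<lambda>N. F N = p N (Suc a)) sequentially"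
        using evN
      proof eventually_elim
        case (elim N)
        have q: "qs_vector N \<mu> (p N)" using assms(2) elim by simp
        show ?case using rowi[OF q, of "Suc a"] elim assms(1) by (simp add: F_def mult.assoc)
      qed
      have small: "(\<lambda>N. real (a+2) / real N * p N (a+2)) \<longlonglongrightarrow> 0"
      proof (rule tendsto_sandwich[OF _ _ tendsto_const cN[of "real (a+2)"]])
        show "eventually (\<lambda>N. 0 \<le> real (a+2) / real N * p N (a+2)) sequentially"
          using evN
        proof eventually_elim
          case (elim N)
          have q: "qs_vector N \<mu> (p N)" using assms(2) elim by simp
          show ?case using le1[OF q, of "a+2"] elim by simp
        qed
        show "eventually (\<lambda>N. real (a+2) / real N * p N (a+2) \<le> real (a+2) / real N) sequentially"
          using evN
        proof eventually_elim
          case (elim N)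
          have q: "qs_vector N \<mu> (p N)" using assms(2) elim by simp
          have "p N (a+2) \<le> 1" using le1[OF q, of "a+2"] elim by simp
          then show ?case by (intro mult_left_le) auto
        qed
      qed
      have "F \<longlonglongrightarrow> (\<mu> * (1 - 0) * ((1 - \<mu>) * \<mu> ^ a) + \<mu> * 0) / ((1 - \<mu>) + \<mu>)"
        unfolding F_def
        by (intro tendsto_intros Suc.IH small l0 cN) simp
      then have "F \<longlonglongrightarrow> (1 - \<mu>) * \<mu> ^ Suc a" by (simp add: algebra_simps)
      then show ?case using Lim_transform_eventually[OF _ eq] by blast
    qed
    show "(\<lambda>N. p N 0) \<longlonglongrightarrow> 1 - \<mu> \<and>
            (\<lambda>N. mbar N (p N) / real N) \<longlonglongrightarrow> 1 - \<mu> \<and>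
            (\<forall>a::nat. a \<ge> 1 \<longrightarrow> (\<lambda>N. p N a) \<longlonglongrightarrow> (1 - \<mu>) * \<mu> ^ a)"
      using l0 Lim_transform_eventually[OF l0 mbev] all by simp
  qed
  show ?thesis using part1 part2 by blast
qed

end
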